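(* A symbolic matrix product $P$ is real-eigenvalued if and only if $P$ is symmetric.
   Context: Let $X_1,\dots,X_\ell$ be formal variables. A symbolic matrix product of degree $k$ with $\ell$ variables is a formal word $P=\prod_{i=1}^{k}X_{\iota(i)}^{\tau(i)}$ with $\iota:[k]\to[\ell]$ and $\tau:[k]\to\{1,T\}$. Formal transposition acts on words by $(X_i^{1})^T=X_i^T$, $(X_i^T)^T=X_i$ and $(W_1W_2)^T=W_2^TW_1^T$; equality of products means equality as formal words. For $n\in\mathbb N$ and $A_1,\dots,A_\ell\in\mathbb R^{n\times n}$, $P(A_1,\dots,A_\ell)\in\mathbb R^{n\times n}$ denotes the matrix obtained by substituting $A_i$ for $X_i$ (and $A_i^T$ for $X_i^T$) and multiplying. $P$ is called real-eigenvalued if for every $n\in\mathbb N$ and all $A_1,\dots,A_\ell\in\mathbb R^{n\times n}$, all (complex) eigenvalues of $P(A_1,\dots,A_\ell)$ are real. $P$ is called symmetric if $k$ is even and there exists $j\in[k]$ such that, with indices taken modulo $k$, the cyclically shifted word $\prod_{i=j+1}^{j+k}X_{\iota(i)}^{\tau(i)}$ equals $LL^T$ as a formal word, where $L=\prod_{i=j+1}^{j+k/2}X_{\iota(i)}^{\tau(i)}$. *)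

theory Defs
  imports "Jordan_Normal_Form.Char_Poly"
begin

text \<open>A symbolic matrix product is a word: a list of letters (i, t) where i is the
  variable index and t = True means the letter is X_i^T, t = False means X_i.\<close>
type_synonym word = "(nat \<times> bool) list"

definition word_over :: "nat \<Rightarrow> word \<Rightarrow> bool" where
  "word_over l w \<longleftrightarrow> w \<noteq> [] \<and> (\<forall>(i, t) \<in> set w. i < l)"

definition word_transpose :: "word \<Rightarrow> word" where
  "word_transpose w = rev (map (\<lambda>(i, t). (i, \<not> t)) w)"

definition letter_mat :: "(nat \<Rightarrow> real mat) \<Rightarrow> nat \<times> bool \<Rightarrow> real mat" where
  "letter_mat A x = (if snd x then transpose_mat (A (fst x)) else A (fst x))"

definition eval_word :: "nat \<Rightarrow> (nat \<Rightarrow> real mat) \<Rightarrow> word \<Rightarrow> real mat" where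
  "eval_word n A w = foldr (\<lambda>x M. letter_mat A x * M) w (1\<^sub>m n)"

definition real_eigenvalued :: "nat \<Rightarrow> word \<Rightarrow> bool" where
  "real_eigenvalued l w \<longleftrightarrow>
     (\<forall>n::nat. \<forall>A :: nat \<Rightarrow> real mat.
        (\<forall>i<l. A i \<in> carrier_mat n n) \<longrightarrow>
        (\<forall>z::complex. eigenvalue (map_mat complex_of_real (eval_word n A w)) z \<longrightarrow> z \<in> \<real>))"

definition symmetric_word :: "word \<Rightarrow> bool" where
  "symmetric_word w \<longleftrightarrow> even (length w) \<and>
     (\<exists>j < length w. let r = rotate j w; L = take (length w div 2) r
                     in r = L @ word_transpose L)"

end

theory Submission
  imports Defs "Jordan_Normal_Form.Schur_Decomposition"
begin

definition mtr :: "'a::comm_ring_1 mat \<Rightarrow> 'a" where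
  "mtr A = (\<Sum>i<dim_row A. A $$ (i,i))"

lemma mtr_mult_comm:
  fixes A B :: "'a::comm_ring_1 mat"
  assumes A: "A \<in> carrier_mat n m" and B: "B \<in> carrier_mat m n"
  shows "mtr (A * B) = mtr (B * A)"
proof -
  have "mtr (A * B) = (\<Sum>i<n. \<Sum>j<m. A $$ (i,j) * B $$ (j,i))"
    unfolding mtr_def using A B
    by (auto simp: scalar_prod_def row_def col_def intro!: sum.cong sum.reindex_bij_witness[of _ id id])
  also have "\<dots> = (\<Sum>j<m. \<Sum>i<n. B $$ (j,i) * A $$ (i,j))"
    by (subst sum.swap) (simp add: mult.commute)
  also have "\<dots> = mtr (B * A)"
    unfolding mtr_def using A B
    by (auto simp: scalar_prod_def row_def col_def intro!: sum.cong sum.reindex_bij_witness[of _ id id])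
  finally show ?thesis .
qed

lemma mtr_real_if_eigs_real:
  fixes C :: "complex mat"
  assumes C: "C \<in> carrier_mat n n"
    and ev: "\<And>z. eigenvalue C z \<Longrightarrow> z \<in> \<real>"
  shows "mtr C \<in> \<real>"
proof -
  obtain es where cp: "char_poly C = (\<Prod> a \<leftarrow> es. [:- a, 1:])"
    using char_poly_factorized[OF C] by blast
  obtain B P Q where sd: "schur_decomposition C es = (B,P,Q)"
    by (cases "schur_decomposition C es") auto
  from schur_decomposition[OF C cp sd]
  have sim: "similar_mat_wit C B P Q" and diag: "diag_mat B = es" by auto
  from sim C have car: "B \<in> carrier_mat n n" "P \<in> carrier_mat n n" "Q \<in> carrier_mat n n"
    and QP: "Q * P = 1\<^sub>m n" and CB: "C = P * B * Q"
    unfolding similar_mat_wit_def Let_def by auto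
  have "mtr C = mtr (P * (B * Q))" using CB car by (simp add: assoc_mult_mat[of P n n B n Q n])
  also have "\<dots> = mtr ((B * Q) * P)" using car by (intro mtr_mult_comm) auto
  also have "\<dots> = mtr (B * (Q * P))" using car by (simp add: assoc_mult_mat[of B n n Q n P n])
  also have "\<dots> = mtr B" using car QP by simp
  also have "\<dots> = sum_list es"
    unfolding diag[symmetric] mtr_def diag_mat_def
    by (simp add: sum_list_sum_nth atLeast0LessThan)
  finally have eq: "mtr C = sum_list es" .
  have "\<forall>e\<in>set es. e \<in> \<real>"
  proof
    fix e assume e: "e \<in> set es"
    have "poly (char_poly C) e = 0" unfolding cp
      using e by (induction es) (auto simp: poly_prod_list)
    then have "eigenvalue C e" using eigenvalue_root_char_poly[OF C] by simp
    then show "e \<in> \<real>" by (rule ev)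
  qed
  then have "sum_list es \<in> \<real>" by (induction es) auto
  then show ?thesis using eq by simp
qed


definition rf :: "complex mat \<Rightarrow> real mat" where
  "rf C = (let n = dim_row C in mat (2*n) (2*n) (\<lambda>(i,j).
     if i < n then (if j < n then Re (C$$(i,j)) else - Im (C$$(i,j-n)))
     else (if j < n then Im (C$$(i-n,j)) else Re (C$$(i-n,j-n)))))"

lemma sum_split_double:
  fixes f :: "nat \<Rightarrow> 'a::comm_monoid_add"
  shows "(\<Sum>k<2*n. f k) = (\<Sum>k<n. f k) + (\<Sum>k<n. f (k+n))"
proof -
  have "\<And>m. (\<Sum>k<n+m. f k) = (\<Sum>k<n. f k) + (\<Sum>k<m. f (k+n))"
  proof -
    fix m show "(\<Sum>k<n+m. f k) = (\<Sum>k<n. f k) + (\<Sum>k<m. f (k+n))"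
      by (induction m) (simp_all add: ac_simps)
  qed
  from this[of n] show ?thesis by (simp add: mult_2)
qed

lemma rf_dims[simp]: "dim_row (rf C) = 2 * dim_row C" "dim_col (rf C) = 2 * dim_row C"
  unfolding rf_def Let_def by auto

lemma rf_carrier[simp]: "C \<in> carrier_mat n n \<Longrightarrow> rf C \<in> carrier_mat (2*n) (2*n)"
  unfolding rf_def Let_def by auto

lemma rf_index:
  assumes "C \<in> carrier_mat n n" "i < 2*n" "j < 2*n"
  shows "rf C $$ (i,j) = (if i < n then (if j < n then Re (C$$(i,j)) else - Im (C$$(i,j-n)))
     else (if j < n then Im (C$$(i-n,j)) else Re (C$$(i-n,j-n))))"
  using assms unfolding rf_def Let_def by auto

lemma mult_index_sum:
  assumes "A \<in> carrier_mat n m" "B \<in> carrier_mat m p" "i < n" "j < p"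
  shows "(A * B) $$ (i,j) = (\<Sum>k<m. A $$ (i,k) * B $$ (k,j))"
  using assms by (auto simp: scalar_prod_def row_def col_def intro!: sum.reindex_bij_witness[of _ id id])

lemma rf_mult:
  assumes C: "C \<in> carrier_mat n n" and D: "D \<in> carrier_mat n n"
  shows "rf (C * D) = rf C * rf D"
proof (rule eq_matI)
  show "dim_row (rf (C * D)) = dim_row (rf C * rf D)" "dim_col (rf (C * D)) = dim_col (rf C * rf D)"
    using C D by (auto simp: rf_def Let_def)
  fix i j assume "i < dim_row (rf C * rf D)" "j < dim_col (rf C * rf D)"
  then have i: "i < 2*n" and j: "j < 2*n" using C D by (auto simp: rf_def Let_def)
  have CD: "C * D \<in> carrier_mat n n" using C D by auto
  have e1: "(rf C * rf D) $$ (i,j) = (\<Sum>k<n. rf C $$ (i,k) * rf D $$ (k,j)) + (\<Sum>k<n. rf C $$ (i,k+n) * rf D $$ (k+n,j))"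
    using C D i j by (subst mult_index_sum[of _ "2*n" "2*n" _ "2*n"]) (auto simp: sum_split_double)
  have e2: "\<And>a b. a < n \<Longrightarrow> b < n \<Longrightarrow> (C * D) $$ (a,b) = (\<Sum>k<n. C $$ (a,k) * D $$ (k,b))"
    using C D by (intro mult_index_sum) auto
  let ?a = "if i < n then i else i - n" and ?b = "if j < n then j else j - n"
  have a: "?a < n" and b: "?b < n" using i j by auto
  have s1: "(\<Sum>k<n. rf C $$ (i,k) * rf D $$ (k,j)) = (\<Sum>k<n.
      (if i < n then Re (C$$(?a,k)) else Im (C$$(?a,k))) * (if j < n then Re (D$$(k,?b)) else - Im (D$$(k,?b))))"
    by (intro sum.cong refl) (use i j C D in \<open>simp add: rf_index\<close>)
  have s2: "(\<Sum>k<n. rf C $$ (i,k+n) * rf D $$ (k+n,j)) = (\<Sum>k<n.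
      (if i < n then - Im (C$$(?a,k)) else Re (C$$(?a,k))) * (if j < n then Im (D$$(k,?b)) else Re (D$$(k,?b))))"
    by (intro sum.cong refl) (use i j C D in \<open>simp add: rf_index\<close>)
  have l: "rf (C * D) $$ (i,j) = (if i < n then (if j < n then Re ((C*D)$$(?a,?b)) else - Im ((C*D)$$(?a,?b)))
     else (if j < n then Im ((C*D)$$(?a,?b)) else Re ((C*D)$$(?a,?b))))"
    using rf_index[OF CD i j] by simp
  have R: "Re ((C*D)$$(?a,?b)) = (\<Sum>k<n. Re (C$$(?a,k)) * Re (D$$(k,?b))) - (\<Sum>k<n. Im (C$$(?a,k)) * Im (D$$(k,?b)))"
    unfolding e2[OF a b] Re_sum sum_subtractf[symmetric] by simp
  have I: "Im ((C*D)$$(?a,?b)) = (\<Sum>k<n. Re (C$$(?a,k)) * Im (D$$(k,?b))) + (\<Sum>k<n. Im (C$$(?a,k)) * Re (D$$(k,?b)))"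
    unfolding e2[OF a b] Im_sum sum.distrib[symmetric] by simp
  show "rf (C * D) $$ (i,j) = (rf C * rf D) $$ (i,j)"
  proof (cases "i < n")
    case iT: True
    show ?thesis
    proof (cases "j < n")
      case True
      then show ?thesis unfolding e1 s1 s2 l using iT R by (simp add: sum_negf)
    next
      case False
      then show ?thesis unfolding e1 s1 s2 l using iT I by (simp add: sum_negf)
    qed
  next
    case iF: False
    show ?thesis
    proof (cases "j < n")
      case True
      then show ?thesis unfolding e1 s1 s2 l using iF I by (simp add: sum_negf)
    next
      case False
      then show ?thesis unfolding e1 s1 s2 l using iF R by (simp add: sum_negf)
    qed
  qed
qed

lemma rf_one: "rf (1\<^sub>m n) = 1\<^sub>m (2*n)"
  by (rule eq_matI) (auto simp: rf_def Let_def)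

definition adj :: "complex mat \<Rightarrow> complex mat" where
  "adj C = transpose_mat (map_mat cnj C)"

lemma adj_carrier[simp]: "C \<in> carrier_mat n n \<Longrightarrow> adj C \<in> carrier_mat n n"
  unfolding adj_def by auto

lemma rf_adj:
  assumes C: "C \<in> carrier_mat n n"
  shows "rf (adj C) = transpose_mat (rf C)"
  by (rule eq_matI) (use C in \<open>auto simp: rf_def Let_def adj_def\<close>)

lemma rf_eig:
  assumes C: "C \<in> carrier_mat n n" and ev: "eigenvalue C z"
  shows "eigenvalue (map_mat complex_of_real (rf C)) z"
proof -
  from ev obtain v where v: "v \<in> carrier_vec n" "v \<noteq> 0\<^sub>v n" "C *\<^sub>v v = z \<cdot>\<^sub>v v"
    using C unfolding eigenvalue_def eigenvector_def by auto
  define u where "u = vec (2*n) (\<lambda>i. if i < n then v $ i else - \<i> * v $ (i - n))"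
  have u: "u \<in> carrier_vec (2*n)" unfolding u_def by auto
  have "u \<noteq> 0\<^sub>v (2*n)"
  proof
    assume "u = 0\<^sub>v (2*n)"
    then have "\<And>i. i < n \<Longrightarrow> v $ i = 0"
    proof -
      fix i assume i: "i < n"
      then have "u $ i = v $ i" unfolding u_def by simp
      then show "v $ i = 0" using \<open>u = 0\<^sub>v (2*n)\<close> i by simp
    qed
    then have "v = 0\<^sub>v n" using v by (intro eq_vecI) auto
    then show False using v by simp
  qed
  moreover have "map_mat complex_of_real (rf C) *\<^sub>v u = z \<cdot>\<^sub>v u"
  proof (rule eq_vecI)
    show "dim_vec (map_mat complex_of_real (rf C) *\<^sub>v u) = dim_vec (z \<cdot>\<^sub>v u)"
      using C u by auto
    fix i assume "i < dim_vec (z \<cdot>\<^sub>v u)"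
    then have i: "i < 2*n" using u by auto
    have Cv: "\<And>a. a < n \<Longrightarrow> (\<Sum>k<n. C $$ (a,k) * v $ k) = z * v $ a"
    proof -
      fix a assume a: "a < n"
      have "(C *\<^sub>v v) $ a = (\<Sum>k<n. C $$ (a,k) * v $ k)"
        using C v(1) a by (auto simp: scalar_prod_def row_def intro!: sum.reindex_bij_witness[of _ id id])
      moreover have "(C *\<^sub>v v) $ a = z * v $ a" unfolding v(3) using v(1) a by simp
      ultimately show "(\<Sum>k<n. C $$ (a,k) * v $ k) = z * v $ a" by simp
    qed
    have lhs: "(map_mat complex_of_real (rf C) *\<^sub>v u) $ i = (\<Sum>k<2*n. complex_of_real (rf C $$ (i,k)) * u $ k)"
      using C u i by (auto simp: scalar_prod_def row_def intro!: sum.reindex_bij_witness[of _ id id])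
    show "(map_mat complex_of_real (rf C) *\<^sub>v u) $ i = (z \<cdot>\<^sub>v u) $ i"
    proof (cases "i < n")
      case True
      have "(\<Sum>k<2*n. complex_of_real (rf C $$ (i,k)) * u $ k)
          = (\<Sum>k<n. (complex_of_real (Re (C $$ (i,k))) + \<i> * complex_of_real (Im (C $$ (i,k)))) * v $ k)"
        unfolding sum_split_double sum.distrib[symmetric] using True i C
        by (intro sum.cong) (auto simp: rf_index u_def algebra_simps)
      also have "\<dots> = (\<Sum>k<n. C $$ (i,k) * v $ k)"
        by (intro sum.cong refl) (simp add: complex_eq[symmetric])
      finally show ?thesis using lhs Cv[OF True] True u by (simp add: u_def)
    next
      case False
      have "(\<Sum>k<2*n. complex_of_real (rf C $$ (i,k)) * u $ k)
          = (\<Sum>k<n. (- \<i>) * ((complex_of_real (Re (C $$ (i-n,k))) + \<i> * complex_of_real (Im (C $$ (i-n,k)))) * v $ k))"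
        unfolding sum_split_double sum.distrib[symmetric] using False i C
        by (intro sum.cong) (auto simp: rf_index u_def algebra_simps)
      also have "\<dots> = (- \<i>) * (\<Sum>k<n. C $$ (i-n,k) * v $ k)"
        by (simp add: sum_distrib_left complex_eq[symmetric])
      finally show ?thesis using lhs Cv[of "i-n"] False i u by (simp add: u_def)
    qed
  qed
  ultimately show ?thesis using u C unfolding eigenvalue_def eigenvector_def by auto
qed


definition flip :: "nat \<times> bool \<Rightarrow> nat \<times> bool" where
  "flip x = (fst x, \<not> snd x)"

definition lab :: "word \<Rightarrow> int \<Rightarrow> nat \<times> bool" where
  "lab w a = w ! nat (a mod int (length w))"

fun Fz :: "word \<Rightarrow> complex \<Rightarrow> complex \<Rightarrow> word \<Rightarrow> int \<Rightarrow> int \<Rightarrow> complex" where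
  "Fz w t p [] a e = (if a = e then 1 else 0)"
| "Fz w t p (x#u) a e = (if lab w a = x then t * Fz w t p u (a+1) e else 0)
     + (if lab w (a-1) = flip x then p * Fz w t p u (a-1) e else 0)"

fun Nn :: "word \<Rightarrow> word \<Rightarrow> int \<Rightarrow> int \<Rightarrow> nat" where
  "Nn w [] a e = (if a = e then 1 else 0)"
| "Nn w (x#u) a e = (if lab w a = x then Nn w u (a+1) e else 0)
     + (if lab w (a-1) = flip x then Nn w u (a-1) e else 0)"

lemma Nn_zero: "\<bar>e - a\<bar> > int (length u) \<Longrightarrow> Nn w u a e = 0"
  by (induction u arbitrary: a) auto

lemma Fz_Nn:
  assumes t: "t \<noteq> 0"
  shows "Fz w t (inverse t) u a e = t powi (e - a) * of_nat (Nn w u a e)"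
proof (induction u arbitrary: a)
  case Nil
  then show ?case by auto
next
  case (Cons x u)
  have "t powi (e - a) = t powi (1 + (e - (a+1)))" by simp
  also have "\<dots> = t powi 1 * t powi (e - (a+1))" by (rule power_int_add) (use t in auto)
  finally have 1: "t * t powi (e - (a + 1)) = t powi (e - a)" by simp
  have "t powi (e - a) = t powi ((-1) + (e - (a-1)))" by simp
  also have "\<dots> = t powi (-1) * t powi (e - (a-1))" by (rule power_int_add) (use t in auto)
  finally have 2: "inverse t * t powi (e - (a - 1)) = t powi (e - a)" by (simp add: power_int_minus)
  show ?case by (auto simp: Cons.IH mult.assoc[symmetric] 1 2 distrib_left)
qed

lemma Nn_back:
  assumes "Nn w u a (a - int (length u)) > 0" "j < length u"
  shows "lab w (a - int j - 1) = flip (u ! j)"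
  using assms
proof (induction u arbitrary: a j)
  case Nil
  then show ?case by simp
next
  case (Cons x u)
  have z: "Nn w u (a+1) (a - int (length (x#u))) = 0" by (rule Nn_zero) auto
  from Cons.prems z have h: "lab w (a-1) = flip x" and p: "Nn w u (a-1) ((a-1) - int (length u)) > 0"
    by (auto split: if_splits simp: algebra_simps)
  show ?case
  proof (cases j)
    case 0
    then show ?thesis using h by simp
  next
    case (Suc j')
    then have "j' < length u" using Cons.prems by simp
    from Cons.IH[OF p this] show ?thesis using Suc by (simp add: algebra_simps)
  qed
qed

lemma Nn_fwd:
  assumes "\<And>j. j < length u \<Longrightarrow> lab w (a + int j) = u ! j"
  shows "Nn w u a (a + int (length u)) \<ge> 1"
  using assms
proof (induction u arbitrary: a)
  case Nil
  then show ?case by simp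
next
  case (Cons x u)
  have h: "lab w a = x" using Cons.prems[of 0] by simp
  have "\<And>j. j < length u \<Longrightarrow> lab w (a + 1 + int j) = u ! j"
    using Cons.prems by (metis Suc_less_eq add.assoc length_Cons nth_Cons_Suc of_nat_Suc add.commute)
  from Cons.IH[OF this] have "Nn w u (a+1) (a + 1 + int (length u)) \<ge> 1" .
  then show ?case using h by (simp add: algebra_simps)
qed


definition Mx :: "word \<Rightarrow> complex \<Rightarrow> nat \<times> bool \<Rightarrow> complex mat" where
  "Mx w t x = mat (length w) (length w) (\<lambda>(a,b).
     (if b = Suc a mod length w \<and> w ! a = x then t else 0)
   + (if a = Suc b mod length w \<and> w ! b = flip x then cnj t else 0))"

definition cprod :: "word \<Rightarrow> complex \<Rightarrow> word \<Rightarrow> complex mat" where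
  "cprod w t u = foldr (\<lambda>x M. Mx w t x * M) u (1\<^sub>m (length w))"

lemma Mx_carrier[simp]: "Mx w t x \<in> carrier_mat (length w) (length w)"
  unfolding Mx_def by auto

lemma cprod_carrier[simp]: "cprod w t u \<in> carrier_mat (length w) (length w)"
  unfolding cprod_def by (induction u) (auto intro!: mult_carrier_mat)

lemma cprod_Cons: "cprod w t (x#u) = Mx w t x * cprod w t u"
  unfolding cprod_def by simp

lemma Fz_zero: "\<bar>e - a\<bar> > int (length u) \<Longrightarrow> Fz w t p u a e = 0"
  by (induction u arbitrary: a) auto

lemma mod_fwd:
  assumes k: "0 < k"
  shows "Suc (nat (a mod int k)) mod k = nat ((a + 1) mod int k)"
proof -
  have "int (Suc (nat (a mod int k)) mod k) = (a mod int k + 1) mod int k"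
    using k by (simp add: zmod_int add.commute)
  also have "\<dots> = (a + 1) mod int k" by (rule mod_add_left_eq)
  finally show ?thesis by (metis nat_int)
qed

lemma mod_bwd:
  assumes k: "0 < k" and c: "c < k"
  shows "(nat (a mod int k) = Suc c mod k) \<longleftrightarrow> (c = nat ((a - 1) mod int k))"
proof -
  have A: "0 \<le> a mod int k" using k by simp
  have "(nat (a mod int k) = Suc c mod k) \<longleftrightarrow> a mod int k = int (Suc c mod k)"
    using A by auto
  also have "int (Suc c mod k) = (int c + 1) mod int k" by (simp add: zmod_int add.commute)
  finally have e1: "(nat (a mod int k) = Suc c mod k) \<longleftrightarrow> a mod int k = (int c + 1) mod int k" .
  have e2: "a mod int k = (int c + 1) mod int k \<longleftrightarrow> (a - 1) mod int k = int c"
  proof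
    assume h: "a mod int k = (int c + 1) mod int k"
    have "(a - 1) mod int k = (a mod int k - 1) mod int k" by (simp add: mod_diff_left_eq)
    also have "\<dots> = ((int c + 1) mod int k - 1) mod int k" using h by simp
    also have "\<dots> = (int c + 1 - 1) mod int k" by (simp add: mod_diff_left_eq)
    also have "\<dots> = int c" using c by simp
    finally show "(a - 1) mod int k = int c" .
  next
    assume h: "(a - 1) mod int k = int c"
    have "a mod int k = ((a - 1) + 1) mod int k" by simp
    also have "\<dots> = ((a - 1) mod int k + 1) mod int k" by (simp add: mod_add_left_eq)
    also have "\<dots> = (int c + 1) mod int k" using h by simp
    finally show "a mod int k = (int c + 1) mod int k" .
  qed
  have e3: "(a - 1) mod int k = int c \<longleftrightarrow> c = nat ((a - 1) mod int k)"
    using k by auto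
  show ?thesis using e1 e2 e3 by simp
qed

lemma sum_delta_cond:
  fixes t :: complex and k c0 :: nat
  assumes "c0 < k"
  shows "(\<Sum>c<k. (if c = c0 \<and> P c then t else 0) * f c) = (if P c0 then t * f c0 else 0)"
proof -
  have "(\<Sum>c<k. (if c = c0 \<and> P c then t else 0) * f c) = (\<Sum>c<k. if c = c0 then (if P c0 then t * f c0 else 0) else 0)"
    by (intro sum.cong) auto
  also have "\<dots> = (if P c0 then t * f c0 else 0)" using assms by simp
  finally show ?thesis .
qed

lemma Mx_row:
  assumes k: "0 < length w" and Q: "Q \<in> carrier_mat (length w) (length w)" and b: "b < length w"
  shows "(Mx w t x * Q) $$ (nat (a mod int (length w)), b)
    = (if lab w a = x then t * Q $$ (nat ((a+1) mod int (length w)), b) else 0)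
    + (if lab w (a-1) = flip x then cnj t * Q $$ (nat ((a-1) mod int (length w)), b) else 0)"
proof -
  define k where "k = length w"
  have kk: "0 < k" using k k_def by simp
  define a' where "a' = nat (a mod int k)"
  define c1 where "c1 = nat ((a+1) mod int k)"
  define c2 where "c2 = nat ((a-1) mod int k)"
  have a': "a' < k" unfolding a'_def using kk by (simp add: nat_less_iff)
  have c1: "c1 < k" unfolding c1_def using kk by (simp add: nat_less_iff)
  have c2: "c2 < k" unfolding c2_def using kk by (simp add: nat_less_iff)
  have "(Mx w t x * Q) $$ (a', b) = (\<Sum>c<k. Mx w t x $$ (a',c) * Q $$ (c,b))"
    using Q b a' unfolding k_def by (intro mult_index_sum) auto
  also have "\<dots> = (\<Sum>c<k. (if c = c1 \<and> (\<lambda>_. w ! a' = x) c then t else 0) * Q $$ (c,b))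
      + (\<Sum>c<k. (if c = c2 \<and> (\<lambda>c. w ! c = flip x) c then cnj t else 0) * Q $$ (c,b))"
    unfolding sum.distrib[symmetric]
  proof (intro sum.cong refl)
    fix c assume "c \<in> {..<k}"
    then have c: "c < k" by simp
    have "Mx w t x $$ (a',c) = (if c = Suc a' mod k \<and> w ! a' = x then t else 0)
      + (if a' = Suc c mod k \<and> w ! c = flip x then cnj t else 0)"
      unfolding Mx_def k_def using a' c k_def by simp
    also have "Suc a' mod k = c1" unfolding a'_def c1_def using mod_fwd[OF kk] by simp
    also have "(a' = Suc c mod k) = (c = c2)" unfolding a'_def c2_def using mod_bwd[OF kk c] by simp
    finally show "Mx w t x $$ (a',c) * Q $$ (c,b) = (if c = c1 \<and> (\<lambda>_. w ! a' = x) c then t else 0) * Q $$ (c,b)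
      + (if c = c2 \<and> (\<lambda>c. w ! c = flip x) c then cnj t else 0) * Q $$ (c,b)"
      by (simp add: distrib_right)
  qed
  also have "\<dots> = (if w ! a' = x then t * Q $$ (c1,b) else 0) + (if w ! c2 = flip x then cnj t * Q $$ (c2,b) else 0)"
    by (simp only: sum_delta_cond[OF c1] sum_delta_cond[OF c2])
  finally show ?thesis unfolding lab_def a'_def c1_def c2_def k_def by simp
qed

lemma sum_extend:
  fixes f :: "int \<Rightarrow> complex"
  assumes "{x..y} \<subseteq> {x'..y'}" "\<And>e. e \<in> {x'..y'} \<Longrightarrow> e \<notin> {x..y} \<Longrightarrow> f e = 0"
  shows "sum f {x..y} = sum f {x'..y'}"
  using assms by (intro sum.mono_neutral_left) auto

lemma cprod_entry:
  assumes k: "0 < length w" and b: "b < length w"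
  shows "cprod w t u $$ (nat (a mod int (length w)), b)
    = (\<Sum>e\<in>{a - int (length u) .. a + int (length u)}. if e mod int (length w) = int b then Fz w t (cnj t) u a e else 0)"
  using b
proof (induction u arbitrary: a)
  case Nil
  have "nat (a mod int (length w)) < length w" using k by (simp add: nat_less_iff)
  moreover have "{a - int (length ([]::word)) .. a + int (length ([]::word))} = {a}" by simp
  moreover have "(nat (a mod int (length w)) = b) = (a mod int (length w) = int b)"
    using k by auto
  ultimately show ?case using Nil k unfolding cprod_def by simp
next
  case (Cons x u)
  let ?k = "int (length w)"
  let ?L = "int (length u)"
  let ?I = "{a - (?L + 1) .. a + (?L + 1)}"
  define G where "G = (\<lambda>a'. \<lambda>e. if e mod ?k = int b then Fz w t (cnj t) u a' e else 0)"
  have IH1: "cprod w t u $$ (nat ((a+1) mod ?k), b) = sum (G (a+1)) ?I"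
    unfolding Cons.IH[OF Cons.prems, of "a+1"] G_def
    by (rule sum_extend) (auto intro!: Fz_zero)
  have IH2: "cprod w t u $$ (nat ((a-1) mod ?k), b) = sum (G (a-1)) ?I"
    unfolding Cons.IH[OF Cons.prems, of "a-1"] G_def
    by (rule sum_extend) (auto intro!: Fz_zero)
  have "cprod w t (x#u) $$ (nat (a mod ?k), b)
     = (if lab w a = x then t * sum (G (a+1)) ?I else 0) + (if lab w (a-1) = flip x then cnj t * sum (G (a-1)) ?I else 0)"
    unfolding cprod_Cons Mx_row[OF k cprod_carrier Cons.prems] IH1 IH2 ..
  also have "\<dots> = (\<Sum>e\<in>?I. if e mod ?k = int b then Fz w t (cnj t) (x#u) a e else 0)"
  proof -
    have h: "(\<Sum>e\<in>?I. if e mod ?k = int b then (if P then s * Fz w t (cnj t) u a' e else 0) else 0)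
        = (if P then s * sum (G a') ?I else 0)" for P s a'
    proof (cases P)
      case True
      have "(\<Sum>e\<in>?I. if e mod ?k = int b then (if P then s * Fz w t (cnj t) u a' e else 0) else 0)
        = (\<Sum>e\<in>?I. s * (if e mod ?k = int b then Fz w t (cnj t) u a' e else 0))"
        using True by (intro sum.cong) auto
      then show ?thesis using True unfolding G_def sum_distrib_left by simp
    qed simp
    have "(\<Sum>e\<in>?I. if e mod ?k = int b then Fz w t (cnj t) (x#u) a e else 0)
      = (\<Sum>e\<in>?I. (if e mod ?k = int b then (if lab w a = x then t * Fz w t (cnj t) u (a+1) e else 0) else 0)
          + (if e mod ?k = int b then (if lab w (a-1) = flip x then cnj t * Fz w t (cnj t) u (a-1) e else 0) else 0))"
      by (intro sum.cong) auto
    also have "\<dots> = (if lab w a = x then t * sum (G (a+1)) ?I else 0) + (if lab w (a-1) = flip x then cnj t * sum (G (a-1)) ?I else 0)"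
      unfolding sum.distrib h ..
    finally show ?thesis by simp
  qed
  finally show ?case by (simp add: algebra_simps)
qed


lemma flip_neq[simp]: "flip x \<noteq> x" unfolding flip_def by (cases x) auto
lemma flip_flip[simp]: "flip (flip x) = x" unfolding flip_def by (cases x) auto

lemma nat_mod_eq:
  assumes k: "0 < k" and d: "int k dvd (X - int Y)"
  shows "nat (X mod int k) = Y mod k"
proof -
  have "X mod int k = int Y mod int k" using d by (simp add: mod_eq_dvd_iff)
  also have "\<dots> = int (Y mod k)" by (simp add: zmod_int)
  finally show ?thesis by simp
qed

lemma refl_sym:
  assumes k: "0 < length w" and a0: "0 \<le> a" and ak: "a < int (length w)"
    and F: "\<And>j. j < length w \<Longrightarrow> lab w (a - int j - 1) = flip (w ! j)"
  shows "symmetric_word w"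
proof -
  define k where "k = length w"
  have kk: "0 < k" using k k_def by simp
  have F': "\<And>j. j < k \<Longrightarrow> w ! nat ((a - int j - 1) mod int k) = flip (w ! j)"
    using F unfolding lab_def k_def by simp
  show ?thesis
  proof (cases "even a")
    case False
    define j where "j = nat ((a - 1) div 2)"
    have "a \<noteq> 0" using False by auto
    then have a1: "0 \<le> a - 1" using a0 by simp
    have "even (a - 1)" using False by simp
    then have "2 * ((a - 1) div 2) = a - 1" by simp
    moreover have "int (nat ((a-1) div 2)) = (a-1) div 2" using a1 by simp
    ultimately have j2: "2 * int j = a - 1" unfolding j_def by simp
    have jk: "j < k" using j2 ak k_def by linarith
    have "nat ((a - int j - 1) mod int k) = j mod k"
      by (rule nat_mod_eq[OF kk]) (use j2 in simp)
    then have "w ! j = flip (w ! j)" using F'[OF jk] jk by simp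
    then show ?thesis by (metis flip_neq)
  next
    case aev: True
    show ?thesis
    proof (cases "even k")
      case False
      define j where "j = nat ((a - 1 + int k) div 2)"
      have ev: "even (a - 1 + int k)" using aev False by simp
      have j2: "2 * int j = a - 1 + int k" using ev a0 kk unfolding j_def by simp
      have jk: "j < k" using j2 ak k_def by linarith
      have "nat ((a - int j - 1) mod int k) = j mod k"
        by (rule nat_mod_eq[OF kk]) (use j2 in \<open>intro dvdI[of _ _ "-1"], simp\<close>)
      then have "w ! j = flip (w ! j)" using F'[OF jk] jk by simp
      then show ?thesis by (metis flip_neq)
    next
      case kev: True
      define j' where "j' = nat (a div 2)"
      define h where "h = k div 2"
      have j2: "2 * int j' = a" using aev a0 unfolding j'_def by simp
      have h2: "2 * h = k" using kev unfolding h_def by simp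
      have jk: "j' < k" using j2 ak k_def by linarith
      define r where "r = rotate j' w"
      have lr: "length r = k" unfolding r_def k_def by simp
      have rn: "\<And>t. t < k \<Longrightarrow> r ! t = w ! ((j' + t) mod k)"
        unfolding r_def k_def by (simp add: nth_rotate)
      define L where "L = take h r"
      have lL: "length L = h" unfolding L_def using lr h2 by simp
      have fl: "(\<lambda>(i, t). (i, \<not> t)) = flip" unfolding flip_def by auto
      have "r = L @ word_transpose L"
      proof (rule nth_equalityI)
        show "length r = length (L @ word_transpose L)"
          using lr lL h2 by (simp add: word_transpose_def)
        fix t assume "t < length r"
        then have t: "t < k" using lr by simp
        show "r ! t = (L @ word_transpose L) ! t"
        proof (cases "t < h")
          case True
          then show ?thesis unfolding L_def using lr h2 by (simp add: nth_append)
        next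
          case False
          define s where "s = t - h"
          have s: "s < h" using t False h2 unfolding s_def by simp
          have "(L @ word_transpose L) ! t = word_transpose L ! s"
            using False lL unfolding s_def by (simp add: nth_append)
          also have "\<dots> = flip (L ! (h - Suc s))"
            unfolding word_transpose_def fl using s lL by (simp add: rev_nth)
          also have "\<dots> = flip (r ! (h - 1 - s))"
            unfolding L_def using s lr h2 by simp
          also have "\<dots> = flip (w ! ((j' + (h - 1 - s)) mod k))"
            using rn[of "h - 1 - s"] s h2 by simp
          also have "\<dots> = w ! nat ((a - int ((j' + (h - 1 - s)) mod k) - 1) mod int k)"
            using F'[of "(j' + (h - 1 - s)) mod k"] kk by simp
          also have "nat ((a - int ((j' + (h - 1 - s)) mod k) - 1) mod int k) = (j' + t) mod k"
          proof (rule nat_mod_eq[OF kk])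
            have e1: "int ((j' + (h - 1 - s)) mod k) = (int j' + int h - 1 - int s) mod int k"
              using s by (simp add: zmod_int of_nat_diff algebra_simps)
            have eq: "a - ((int j' + int h - 1 - int s)) - 1 - int (j' + t) = - (int k)"
              using j2 h2 s False unfolding s_def by simp
            define Y where "Y = int j' + int h - 1 - int s"
            have m: "Y mod int k = Y - int k * (Y div int k)" by (simp add: minus_mult_div_eq_mod)
            have "a - int ((j' + (h - 1 - s)) mod k) - 1 - int (j' + t) = int k * (Y div int k - 1)"
              unfolding e1 Y_def[symmetric] m using eq unfolding Y_def[symmetric] by (simp add: algebra_simps)
            then show "int k dvd (a - int ((j' + (h - 1 - s)) mod k) - 1 - int (j' + t))" by (rule dvdI)
          qed
          also have "w ! ((j' + t) mod k) = r ! t" using rn[OF t] by simp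
          finally show ?thesis by simp
        qed
      qed
      then show ?thesis unfolding symmetric_word_def Let_def
        using kev jk k_def r_def L_def h_def by auto
    qed
  qed
qed


lemma three_sum:
  fixes g :: "int \<Rightarrow> complex"
  assumes k: "0 < k" and a0: "0 \<le> a" and ak: "a < k"
  shows "(\<Sum>e\<in>{a - k .. a + k}. if e mod k = a then g e else 0) = g (a - k) + g a + g (a + k)"
proof -
  have S: "{e \<in> {a - k .. a + k}. e mod k = a} = {a - k, a, a + k}"
  proof (intro equalityI subsetI)
    fix e assume e: "e \<in> {e \<in> {a - k .. a + k}. e mod k = a}"
    define d where "d = e div k"
    have "e mod k = a" using e by simp
    then have ed: "e = k * d + a" unfolding d_def by (metis mult_div_mod_eq)
    have "k * d \<le> k * 1" using e ed by simp
    then have d1: "d \<le> 1" using k by (simp add: mult_le_cancel_left_pos)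
    have h: "k * (-1) \<le> k * d" using e ed by simp
    then have d2: "-1 \<le> d" by (simp only: mult_le_cancel_left_pos[OF k])
    from d1 d2 have "d = -1 \<or> d = 0 \<or> d = 1" by linarith
    then show "e \<in> {a - k, a, a + k}" using ed by auto
  next
    fix e assume "e \<in> {a - k, a, a + k}"
    then show "e \<in> {e \<in> {a - k .. a + k}. e mod k = a}" using k a0 ak by auto
  qed
  have "(\<Sum>e\<in>{a - k .. a + k}. if e mod k = a then g e else 0) = sum g {e \<in> {a - k .. a + k}. e mod k = a}"
    by (rule sum.inter_filter[symmetric]) simp
  also have "\<dots> = g (a - k) + g a + g (a + k)" unfolding S using k by (simp add: algebra_simps)
  finally show ?thesis .
qed

lemma adj_Mx: "adj (Mx w t x) = Mx w t (flip x)"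
proof (rule eq_matI)
  fix i j assume i: "i < dim_row (Mx w t (flip x))" and j: "j < dim_col (Mx w t (flip x))"
  then have i': "i < length w" and j': "j < length w" by (auto simp: Mx_def)
  have "adj (Mx w t x) $$ (i, j) = cnj (Mx w t x $$ (j, i))"
    using i' j' by (simp add: adj_def Mx_def)
  also have "\<dots> = (if i = Suc j mod length w \<and> w ! j = x then cnj t else 0)
     + (if j = Suc i mod length w \<and> w ! i = flip x then t else 0)"
    using i' j' by (simp add: Mx_def)
  also have "\<dots> = Mx w t (flip x) $$ (i, j)"
    using i' j' by (simp add: Mx_def)
  finally show "adj (Mx w t x) $$ (i, j) = Mx w t (flip x) $$ (i, j)" .
qed (auto simp: adj_def Mx_def)

lemma letter_rf:
  "letter_mat (\<lambda>i. rf (Mx w t (i, False))) x = rf (Mx w t x)"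
proof (cases "snd x")
  case True
  have fx: "flip (fst x, False) = x" using True unfolding flip_def by (cases x) auto
  have "letter_mat (\<lambda>i. rf (Mx w t (i, False))) x = transpose_mat (rf (Mx w t (fst x, False)))"
    using True unfolding letter_mat_def by simp
  also have "\<dots> = rf (adj (Mx w t (fst x, False)))" by (rule rf_adj[symmetric, OF Mx_carrier])
  also have "\<dots> = rf (Mx w t x)" unfolding adj_Mx fx ..
  finally show ?thesis .
next
  case False
  then show ?thesis unfolding letter_mat_def by (cases x) auto
qed

lemma eval_rf:
  "eval_word (2 * length w) (\<lambda>i. rf (Mx w t (i, False))) u = rf (cprod w t u)"
proof (induction u)
  case Nil
  then show ?case unfolding eval_word_def cprod_def by (simp add: rf_one)
next
  case (Cons x u)
  have "eval_word (2 * length w) (\<lambda>i. rf (Mx w t (i, False))) (x # u)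
      = rf (Mx w t x) * eval_word (2 * length w) (\<lambda>i. rf (Mx w t (i, False))) u"
    unfolding eval_word_def by (simp add: letter_rf)
  also have "\<dots> = rf (Mx w t x * cprod w t u)" unfolding Cons.IH
    by (rule rf_mult[symmetric]) (rule Mx_carrier, rule cprod_carrier)
  finally show ?case by (simp add: cprod_Cons)
qed

lemma hard:
  assumes wo: "word_over l w" and ns: "\<not> symmetric_word w"
  shows "\<not> real_eigenvalued l w"
proof -
  define k where "k = length w"
  have kk: "0 < k" using wo unfolding word_over_def k_def by simp
  define \<theta> where "\<theta> = cis (pi / (2 * real k))"
  have th0: "\<theta> \<noteq> 0" unfolding \<theta>_def by simp
  have cth: "cnj \<theta> = inverse \<theta>" unfolding \<theta>_def by (simp add: cis_cnj cis_inverse)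
  have thk: "\<theta> powi int k = \<i>"
  proof -
    have "\<theta> powi int k = \<theta> ^ k" by (simp add: power_int_of_nat)
    also have "\<dots> = cis (real k * (pi / (2 * real k)))" unfolding \<theta>_def by (simp add: DeMoivre)
    also have "real k * (pi / (2 * real k)) = pi / 2" using kk by simp
    finally show ?thesis by (simp add: cis.ctr complex_eq_iff)
  qed
  have thmk: "\<theta> powi (- int k) = - \<i>" using thk by (simp add: power_int_minus)
  define C where "C = cprod w \<theta> w"
  have Cc: "C \<in> carrier_mat k k" unfolding C_def k_def by simp
  define N1 where "N1 = (\<lambda>a::nat. Nn w w (int a) (int a - int k))"
  define N0 where "N0 = (\<lambda>a::nat. Nn w w (int a) (int a))"
  define N2 where "N2 = (\<lambda>a::nat. Nn w w (int a) (int a + int k))"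
  have diag: "C $$ (a, a) = - \<i> * of_nat (N1 a) + of_nat (N0 a) + \<i> * of_nat (N2 a)" if a: "a < k" for a
  proof -
    have na: "nat (int a mod int k) = a" using a by simp
    have "C $$ (a, a) = (\<Sum>e\<in>{int a - int k .. int a + int k}. if e mod int k = int a then Fz w \<theta> (cnj \<theta>) w (int a) e else 0)"
      using cprod_entry[OF _ a[unfolded k_def], of \<theta> w "int a"] kk na unfolding C_def k_def by simp
    also have "\<dots> = Fz w \<theta> (cnj \<theta>) w (int a) (int a - int k) + Fz w \<theta> (cnj \<theta>) w (int a) (int a)
        + Fz w \<theta> (cnj \<theta>) w (int a) (int a + int k)"
      by (rule three_sum) (use kk a in auto)
    also have "\<dots> = - \<i> * of_nat (N1 a) + of_nat (N0 a) + \<i> * of_nat (N2 a)"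
      unfolding cth Fz_Nn[OF th0] N1_def N0_def N2_def using thk thmk by simp
    finally show ?thesis .
  qed
  have N1z: "N1 a = 0" if a: "a < k" for a
  proof (rule ccontr)
    assume "N1 a \<noteq> 0"
    then have p: "Nn w w (int a) (int a - int (length w)) > 0" unfolding N1_def k_def by simp
    have "symmetric_word w"
      by (rule refl_sym[of w "int a"]) (use kk a k_def Nn_back[OF p] in auto)
    then show False using ns by simp
  qed
  have N2pos: "N2 0 \<ge> 1"
  proof -
    have "Nn w w 0 (0 + int (length w)) \<ge> 1"
      by (rule Nn_fwd) (simp add: lab_def zmod_int[symmetric])
    then show ?thesis unfolding N2_def k_def by simp
  qed
  have "Im (mtr C) = (\<Sum>a<k. Im (C $$ (a,a)))" unfolding mtr_def using Cc by (simp add: Im_sum)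
  also have "\<dots> = (\<Sum>a<k. real (N2 a))" by (intro sum.cong refl) (simp add: diag N1z)
  also have "\<dots> \<ge> real (N2 0)" using kk by (intro member_le_sum) auto
  finally have "Im (mtr C) \<ge> 1" using N2pos by linarith
  then have "mtr C \<notin> \<real>" by (auto simp: complex_is_Real_iff)
  then obtain z where ez: "eigenvalue C z" and zr: "z \<notin> \<real>"
    using mtr_real_if_eigs_real[OF Cc] by blast
  define RA where "RA = (\<lambda>i. rf (Mx w \<theta> (i, False)))"
  have ev1: "eigenvalue (map_mat complex_of_real (rf C)) z" by (rule rf_eig[OF Cc ez])
  have rc: "rf C = eval_word (2 * k) RA w"
    unfolding C_def k_def RA_def by (rule eval_rf[symmetric])
  have ev2: "eigenvalue (map_mat complex_of_real (eval_word (2 * k) RA w)) z" using ev1 rc by simp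
  have car: "\<forall>i<l. RA i \<in> carrier_mat (2*k) (2*k)"
    unfolding k_def RA_def by (auto intro: rf_carrier)
  show ?thesis unfolding real_eigenvalued_def
  proof
    assume H: "\<forall>n A. (\<forall>i<l. A i \<in> carrier_mat n n) \<longrightarrow>
        (\<forall>z. eigenvalue (map_mat complex_of_real (eval_word n A w)) z \<longrightarrow> z \<in> \<real>)"
    have "(\<forall>i<l. RA i \<in> carrier_mat (2*k) (2*k)) \<longrightarrow>
        (\<forall>z. eigenvalue (map_mat complex_of_real (eval_word (2*k) RA w)) z \<longrightarrow> z \<in> \<real>)"
      using H by (elim allE)
    then have "z \<in> \<real>" using car ev2 by simp
    then show False using zr by simp
  qed
qed


lemma sym_real_eig:
  fixes S :: "real mat"
  assumes S: "S \<in> carrier_mat n n" and sym: "\<And>i j. i < n \<Longrightarrow> j < n \<Longrightarrow> S $$ (i,j) = S $$ (j,i)"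
    and ev: "eigenvalue (map_mat complex_of_real S) z"
  shows "z \<in> \<real>"
proof -
  from ev obtain v where v: "v \<in> carrier_vec n" "v \<noteq> 0\<^sub>v n" "map_mat complex_of_real S *\<^sub>v v = z \<cdot>\<^sub>v v"
    using S unfolding eigenvalue_def eigenvector_def by auto
  have row: "(\<Sum>j<n. complex_of_real (S $$ (i,j)) * v $ j) = z * v $ i" if i: "i < n" for i
  proof -
    have "(map_mat complex_of_real S *\<^sub>v v) $ i = (\<Sum>j<n. complex_of_real (S $$ (i,j)) * v $ j)"
      using S v(1) i by (auto simp: scalar_prod_def row_def intro!: sum.reindex_bij_witness[of _ id id])
    moreover have "(map_mat complex_of_real S *\<^sub>v v) $ i = z * v $ i" unfolding v(3) using v(1) i by simp
    ultimately show ?thesis by simp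
  qed
  define s where "s = (\<Sum>i<n. cnj (v $ i) * (\<Sum>j<n. complex_of_real (S $$ (i,j)) * v $ j))"
  have "cnj s = (\<Sum>i<n. \<Sum>j<n. v $ i * complex_of_real (S $$ (i,j)) * cnj (v $ j))"
    unfolding s_def by (simp add: sum_distrib_left mult.assoc)
  also have "\<dots> = (\<Sum>j<n. \<Sum>i<n. v $ i * complex_of_real (S $$ (i,j)) * cnj (v $ j))"
    by (rule sum.swap)
  also have "\<dots> = s"
    unfolding s_def sum_distrib_left
    by (intro sum.cong refl) (simp add: sym mult.commute mult.left_commute)
  finally have cs: "cnj s = s" .
  define r where "r = (\<Sum>i<n. (cmod (v $ i))^2)"
  have sr: "s = z * complex_of_real r"
  proof -
    have "s = (\<Sum>i<n. cnj (v $ i) * (z * v $ i))" unfolding s_def by (intro sum.cong refl) (simp add: row)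
    also have "\<dots> = z * (\<Sum>i<n. cnj (v $ i) * v $ i)" by (simp add: sum_distrib_left mult.commute mult.left_commute)
    also have "(\<Sum>i<n. cnj (v $ i) * v $ i) = complex_of_real r"
      unfolding r_def of_real_sum by (intro sum.cong refl) (metis complex_norm_square mult.commute of_real_power)
    finally show ?thesis .
  qed
  have "\<exists>i<n. v $ i \<noteq> 0"
  proof (rule ccontr)
    assume "\<not> (\<exists>i<n. v $ i \<noteq> 0)"
    then have "v = 0\<^sub>v n" using v(1) by (intro eq_vecI) auto
    then show False using v(2) by simp
  qed
  then obtain i where i: "i < n" "v $ i \<noteq> 0" by blast
  have "r > 0" unfolding r_def
    by (rule sum_pos2[of _ i]) (use i in auto)
  have "Im (cnj s) = Im s" using cs by simp
  then have "Im s = 0" by simp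
  then have "Im (z * complex_of_real r) = 0" using sr by simp
  then have "Im z * r = 0" by simp
  then have "Im z = 0" using \<open>r > 0\<close> by simp
  then show ?thesis by (simp add: complex_is_Real_iff)
qed

lemma eig_swap:
  fixes X Y :: "complex mat"
  assumes X: "X \<in> carrier_mat n n" and Y: "Y \<in> carrier_mat n n"
    and ev: "eigenvalue (X * Y) z" and z: "z \<noteq> 0"
  shows "eigenvalue (Y * X) z"
proof -
  from ev obtain v where v: "v \<in> carrier_vec n" "v \<noteq> 0\<^sub>v n" "(X * Y) *\<^sub>v v = z \<cdot>\<^sub>v v"
    using X Y unfolding eigenvalue_def eigenvector_def by auto
  define u where "u = Y *\<^sub>v v"
  have u: "u \<in> carrier_vec n" unfolding u_def using Y v by auto
  have Xu: "X *\<^sub>v u = z \<cdot>\<^sub>v v" unfolding u_def using v(3) v(1) X Y by simp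
  have "u \<noteq> 0\<^sub>v n"
  proof
    assume "u = 0\<^sub>v n"
    then have "X *\<^sub>v u = 0\<^sub>v n" using X by (intro eq_vecI) auto
    then have "z \<cdot>\<^sub>v v = 0\<^sub>v n" using Xu by simp
    have "v $ i = 0" if i: "i < n" for i
    proof -
      have "(z \<cdot>\<^sub>v v) $ i = 0" using \<open>z \<cdot>\<^sub>v v = 0\<^sub>v n\<close> i by simp
      then show ?thesis using z v(1) i by simp
    qed
    then have "v = 0\<^sub>v n" using v(1) by (intro eq_vecI) auto
    then show False using v by simp
  qed
  moreover have "(Y * X) *\<^sub>v u = z \<cdot>\<^sub>v u"
  proof -
    have "(Y * X) *\<^sub>v u = Y *\<^sub>v (X *\<^sub>v u)" using X Y u by (simp add: assoc_mult_mat_vec)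
    also have "\<dots> = Y *\<^sub>v (z \<cdot>\<^sub>v v)" using Xu by simp
    also have "\<dots> = z \<cdot>\<^sub>v u" unfolding u_def using Y v by (simp add: mult_mat_vec)
    finally show ?thesis .
  qed
  ultimately show ?thesis using u Y X unfolding eigenvalue_def eigenvector_def by auto
qed


definition okw :: "nat \<Rightarrow> word \<Rightarrow> bool" where
  "okw l u = (\<forall>x\<in>set u. fst x < l)"

lemma letter_carrier:
  assumes "\<forall>i<l. A i \<in> carrier_mat n n" "fst x < l"
  shows "letter_mat A x \<in> carrier_mat n n"
  using assms unfolding letter_mat_def by auto

lemma eval_carrier:
  assumes A: "\<forall>i<l. A i \<in> carrier_mat n n" and ok: "okw l u"
  shows "eval_word n A u \<in> carrier_mat n n"
  using ok unfolding eval_word_def okw_def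
proof (induction u)
  case Nil then show ?case by simp
next
  case (Cons x u)
  then show ?case using letter_carrier[OF A, of x] by (auto intro!: mult_carrier_mat)
qed

lemma foldr_eval:
  assumes A: "\<forall>i<l. A i \<in> carrier_mat n n" and ok: "okw l u" and M: "M \<in> carrier_mat n n"
  shows "foldr (\<lambda>x M. letter_mat A x * M) u M = eval_word n A u * M"
  using ok
proof (induction u)
  case Nil then show ?case using M unfolding eval_word_def by simp
next
  case (Cons x u)
  have oku: "okw l u" and lx: "letter_mat A x \<in> carrier_mat n n"
    using Cons.prems letter_carrier[OF A] unfolding okw_def by auto
  have eu: "eval_word n A u \<in> carrier_mat n n" by (rule eval_carrier[OF A oku])
  have "foldr (\<lambda>x M. letter_mat A x * M) (x # u) M = letter_mat A x * (eval_word n A u * M)"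
    using Cons.IH[OF oku] by simp
  also have "\<dots> = (letter_mat A x * eval_word n A u) * M"
    using lx eu M by (simp add: assoc_mult_mat)
  also have "letter_mat A x * eval_word n A u = eval_word n A (x # u)"
    unfolding eval_word_def by simp
  finally show ?case .
qed

lemma eval_append:
  assumes A: "\<forall>i<l. A i \<in> carrier_mat n n" and ok: "okw l u" "okw l v"
  shows "eval_word n A (u @ v) = eval_word n A u * eval_word n A v"
proof -
  have "eval_word n A (u @ v) = foldr (\<lambda>x M. letter_mat A x * M) u (eval_word n A v)"
    unfolding eval_word_def by simp
  also have "\<dots> = eval_word n A u * eval_word n A v"
    by (rule foldr_eval[OF A ok(1) eval_carrier[OF A ok(2)]])
  finally show ?thesis .
qed

lemma wt_Cons: "word_transpose (x # u) = word_transpose u @ [flip x]"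
  unfolding word_transpose_def flip_def by (cases x) auto

lemma okw_wt: "okw l (word_transpose u) = okw l u"
  unfolding okw_def word_transpose_def by auto

lemma letter_flip:
  assumes "\<forall>i<l. A i \<in> carrier_mat n n" "fst x < l"
  shows "letter_mat A (flip x) = transpose_mat (letter_mat A x)"
  using assms unfolding letter_mat_def flip_def by auto

lemma eval_transpose:
  assumes A: "\<forall>i<l. A i \<in> carrier_mat n n" and ok: "okw l u"
  shows "eval_word n A (word_transpose u) = transpose_mat (eval_word n A u)"
  using ok
proof (induction u)
  case Nil then show ?case unfolding eval_word_def word_transpose_def by simp
next
  case (Cons x u)
  have oku: "okw l u" and x: "fst x < l" using Cons.prems unfolding okw_def by auto
  have lx: "letter_mat A x \<in> carrier_mat n n" by (rule letter_carrier[OF A x])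
  have eu: "eval_word n A u \<in> carrier_mat n n" by (rule eval_carrier[OF A oku])
  have okf: "okw l [flip x]" using x unfolding okw_def flip_def by simp
  have e1: "eval_word n A [flip x] = transpose_mat (letter_mat A x)"
    unfolding eval_word_def using letter_flip[OF A x] lx by simp
  have "eval_word n A (word_transpose (x # u)) = eval_word n A (word_transpose u) * eval_word n A [flip x]"
    unfolding wt_Cons by (rule eval_append[OF A]) (use oku okf okw_wt in auto)
  also have "\<dots> = transpose_mat (eval_word n A u) * transpose_mat (letter_mat A x)"
    unfolding Cons.IH[OF oku] e1 ..
  also have "\<dots> = transpose_mat (letter_mat A x * eval_word n A u)"
    using lx eu by (simp add: transpose_mult)
  also have "letter_mat A x * eval_word n A u = eval_word n A (x # u)"
    unfolding eval_word_def by simp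
  finally show ?case .
qed

lemma easy:
  assumes wo: "word_over l w" and sy: "symmetric_word w"
  shows "real_eigenvalued l w"
  unfolding real_eigenvalued_def
proof (intro allI impI)
  fix n :: nat and A :: "nat \<Rightarrow> real mat" and z :: complex
  assume A: "\<forall>i<l. A i \<in> carrier_mat n n"
  assume ev: "eigenvalue (map_mat complex_of_real (eval_word n A w)) z"
  define k where "k = length w"
  have okw: "okw l w" using wo unfolding word_over_def okw_def by auto
  from sy obtain j where jk: "j < k" and r: "rotate j w = take (k div 2) (rotate j w) @ word_transpose (take (k div 2) (rotate j w))"
    unfolding symmetric_word_def Let_def k_def by auto
  define L where "L = take (k div 2) (rotate j w)"
  have "set L \<subseteq> set w" unfolding L_def using set_take_subset[of "k div 2" "rotate j w"] by simp
  then have okL: "okw l L" using okw unfolding okw_def by blast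
  have ok1: "okw l (take j w)" and ok2: "okw l (drop j w)" using okw unfolding okw_def
    by (auto dest: in_set_takeD in_set_dropD)
  define U where "U = eval_word n A (take j w)"
  define V where "V = eval_word n A (drop j w)"
  have U: "U \<in> carrier_mat n n" unfolding U_def by (rule eval_carrier[OF A ok1])
  have V: "V \<in> carrier_mat n n" unfolding V_def by (rule eval_carrier[OF A ok2])
  have wUV: "eval_word n A w = U * V"
    unfolding U_def V_def by (subst eval_append[OF A ok1 ok2, symmetric]) simp
  have rot: "rotate j w = drop j w @ take j w"
    using jk unfolding k_def by (simp add: rotate_drop_take)
  define E where "E = eval_word n A L"
  have E: "E \<in> carrier_mat n n" unfolding E_def by (rule eval_carrier[OF A okL])
  have VU: "V * U = E * transpose_mat E"
  proof -
    have "V * U = eval_word n A (rotate j w)"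
      unfolding rot U_def V_def by (rule eval_append[OF A ok2 ok1, symmetric])
    also have "\<dots> = eval_word n A (L @ word_transpose L)" using r unfolding L_def by simp
    also have "\<dots> = E * eval_word n A (word_transpose L)"
      unfolding E_def by (rule eval_append[OF A okL]) (simp add: okw_wt okL)
    also have "eval_word n A (word_transpose L) = transpose_mat E"
      unfolding E_def by (rule eval_transpose[OF A okL])
    finally show ?thesis .
  qed
  show "z \<in> \<real>"
  proof (cases "z = 0")
    case True then show ?thesis by simp
  next
    case False
    have "map_mat complex_of_real (eval_word n A w) = map_mat complex_of_real U * map_mat complex_of_real V"
      unfolding wUV using U V by (simp add: of_real_hom.mat_hom_mult)
    then have evUV: "eigenvalue (map_mat complex_of_real U * map_mat complex_of_real V) z" using ev by simp
    have "eigenvalue (map_mat complex_of_real V * map_mat complex_of_real U) z"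
      by (rule eig_swap[where n=n, OF _ _ evUV False]) (use U V in auto)
    moreover have "map_mat complex_of_real V * map_mat complex_of_real U = map_mat complex_of_real (V * U)"
      using U V by (simp add: of_real_hom.mat_hom_mult)
    ultimately have ev2: "eigenvalue (map_mat complex_of_real (E * transpose_mat E)) z" unfolding VU by simp
    have S: "E * transpose_mat E \<in> carrier_mat n n" using E by auto
    have sym: "(E * transpose_mat E) $$ (a,b) = (E * transpose_mat E) $$ (b,a)" if "a < n" "b < n" for a b
    proof -
      have "transpose_mat (E * transpose_mat E) = E * transpose_mat E"
        using E by (simp add: transpose_mult)
      then have "transpose_mat (E * transpose_mat E) $$ (b,a) = (E * transpose_mat E) $$ (b,a)" by simp
      then show ?thesis using that E by simp
    qed
    show ?thesis by (rule sym_real_eig[OF S sym ev2])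
  qed
qed

theorem mainTheorem1:
  fixes l :: nat and P :: word
  assumes "word_over l P"
  shows "real_eigenvalued l P \<longleftrightarrow> symmetric_word P"
  using easy[OF assms] hard[OF assms] by blast

end
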